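(* Assume $B\subseteq A\subsetneq[m]$. (a) If $q\ge3$, or $q=2$ and $|A|\le m-2$, then the dual code $\mathcal C_{\overline{\mathcal N}_2}^\perp$ is a linear code over $\mathbb F_q$ with parameters $\left[\frac{2q^{|B|+|C|}(q^m-q^{|A|})}{q-1},\ \frac{2q^{|B|+|C|}(q^m-q^{|A|})}{q-1}-2m-|C|,\ 3\right]$. (b) If $q=2$ and $|A|=m-1$, then $\mathcal C_{\overline{\mathcal N}_2}^\perp$ is a binary distance-optimal code with parameters $[2^{m+|B|+|C|},\ 2^{m+|B|+|C|}-2m-|C|,\ 4]$.
   Context: $q$ is a prime power, $\mathbb F_q$ the field of order $q$, $\mathbb F_q^*=\mathbb F_q\setminus\{0\}$, $m\ge2$, $[m]=\{1,\dots,m\}$, $\mathrm{supp}(v)=\{i:v_i\ne0\}$. For nonempty $P\subseteq[m]$, $\Delta_P=\{v\in\mathbb F_q^m:\mathrm{supp}(v)\subseteq P\}$, $\Delta_P^c=\mathbb F_q^m\setminus\Delta_P$. $A,B,C$ are nonempty subsets of $[m]$. Let $\mathcal N_2=\{(w_2+\omega,w_3,w_1)\in\mathbb F_q^{3m}: w_1\in\Delta_A^c,\ w_2\in\Delta_B,\ w_3\in\Delta_C,\ \omega\in\{\mathbf 0,w_1\}\}$ (closed under multiplication by $\mathbb F_q^*$), let $\overline{\mathcal N}_2$ contain exactly one element of each class $\{\alpha x:\alpha\in\mathbb F_q^*\}$, $x\in\mathcal N_2$, and let $\mathcal C_{\overline{\mathcal N}_2}$ be the linear code over $\mathbb F_q$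 spanned by the rows of the $3m\times|\overline{\mathcal N}_2|$ matrix whose columns are the elements of $\overline{\mathcal N}_2$. $\mathcal C^\perp$ is the dual with respect to the Euclidean inner product. An $[n,k,d]$ code is distance-optimal if no linear $[n,k,d+1]$ code over the same field exists. *)

theory Defs
  imports Complex_Main "HOL-Library.Function_Algebras" "HOL-Library.Cardinality"
begin

text \<open>Vectors of F^m are functions nat => 'a vanishing outside [m] = {1..m}.
  Vectors of F^{3m} are triples of such vectors (blocks of coordinates 1..m, m+1..2m, 2m+1..3m).\<close>

definition vecs :: "nat \<Rightarrow> (nat \<Rightarrow> 'a::zero) set" where
  "vecs m = {v. \<forall>i. i \<notin> {1..m} \<longrightarrow> v i = 0}"

definition supp :: "(nat \<Rightarrow> 'a::zero) \<Rightarrow> nat set" where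
  "supp v = {i. v i \<noteq> 0}"

definition Delta :: "nat \<Rightarrow> nat set \<Rightarrow> (nat \<Rightarrow> 'a::zero) set" where
  "Delta m P = {v \<in> vecs m. supp v \<subseteq> P}"

definition Delta_c :: "nat \<Rightarrow> nat set \<Rightarrow> (nat \<Rightarrow> 'a::zero) set" where
  "Delta_c m P = vecs m - Delta m P"

type_synonym 'a vec3 = "(nat \<Rightarrow> 'a) \<times> (nat \<Rightarrow> 'a) \<times> (nat \<Rightarrow> 'a)"

definition N2 :: "nat \<Rightarrow> nat set \<Rightarrow> nat set \<Rightarrow> nat set \<Rightarrow> ('a::comm_ring_1) vec3 set" where
  "N2 m A B C = {(\<lambda>i. w2 i + \<omega> i, w3, w1) | w1 w2 w3 \<omega>.
      w1 \<in> Delta_c m A \<and> w2 \<in> Delta m B \<and> w3 \<in> Delta m C \<and> \<omega> \<in> {(\<lambda>i. 0), w1}}"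

definition smult3 :: "'a::times \<Rightarrow> 'a vec3 \<Rightarrow> 'a vec3" where
  "smult3 \<alpha> x = (case x of (a, b, c) \<Rightarrow> (\<lambda>i. \<alpha> * a i, \<lambda>i. \<alpha> * b i, \<lambda>i. \<alpha> * c i))"

definition is_proj_reps :: "('a::field) vec3 set \<Rightarrow> 'a vec3 set \<Rightarrow> bool" where
  "is_proj_reps N Nbar \<longleftrightarrow> Nbar \<subseteq> N \<and>
     (\<forall>x \<in> N. \<exists>!y. y \<in> Nbar \<and> (\<exists>\<alpha>. \<alpha> \<noteq> 0 \<and> y = smult3 \<alpha> x))"

definition coord3 :: "'a vec3 \<Rightarrow> nat \<times> nat \<Rightarrow> 'a" where
  "coord3 x ji = (case x of (a, b, c) \<Rightarrow>
      (if fst ji = 1 then a (snd ji) else if fst ji = 2 then b (snd ji) else c (snd ji)))"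

text \<open>Words of a code indexed by a finite set I are functions vanishing outside I.\<close>
definition fscale :: "'a::times \<Rightarrow> ('b \<Rightarrow> 'a) \<Rightarrow> ('b \<Rightarrow> 'a)" where
  "fscale c v = (\<lambda>x. c * v x)"

text \<open>Rows of the 3m x |Nbar| matrix whose columns are the elements of Nbar.\<close>
definition gen_rows :: "nat \<Rightarrow> ('a::zero) vec3 set \<Rightarrow> ('a vec3 \<Rightarrow> 'a) set" where
  "gen_rows m Nbar = (\<lambda>ji. \<lambda>x. if x \<in> Nbar then coord3 x ji else 0) ` ({1,2,3} \<times> {1..m})"

definition code_of :: "nat \<Rightarrow> ('a::field) vec3 set \<Rightarrow> ('a vec3 \<Rightarrow> 'a) set" where
  "code_of m Nbar = module.span fscale (gen_rows m Nbar)"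

definition dual_code :: "'b set \<Rightarrow> ('b \<Rightarrow> 'a::field) set \<Rightarrow> ('b \<Rightarrow> 'a) set" where
  "dual_code I C = {c. (\<forall>x. x \<notin> I \<longrightarrow> c x = 0) \<and> (\<forall>c' \<in> C. (\<Sum>x\<in>I. c x * c' x) = 0)}"

definition weight :: "('b \<Rightarrow> 'a::zero) \<Rightarrow> nat" where
  "weight c = card {x. c x \<noteq> 0}"

definition min_dist :: "('b \<Rightarrow> 'a::zero) set \<Rightarrow> nat" where
  "min_dist C = Min (weight ` {c \<in> C. \<exists>x. c x \<noteq> 0})"

definition code_params :: "'b set \<Rightarrow> ('b \<Rightarrow> 'a::field) set \<Rightarrow> nat \<Rightarrow> nat \<Rightarrow> nat \<Rightarrow> bool" where
  "code_params I C n k d \<longleftrightarrow> finite I \<and> card I = n \<and>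
     C \<subseteq> {c. \<forall>x. x \<notin> I \<longrightarrow> c x = 0} \<and> module.subspace fscale C \<and>
     vector_space.dim fscale C = k \<and> min_dist C = d"

definition dist_optimal :: "'a::field itself \<Rightarrow> nat \<Rightarrow> nat \<Rightarrow> nat \<Rightarrow> bool" where
  "dist_optimal T n k d \<longleftrightarrow> \<not> (\<exists>C :: (nat \<Rightarrow> 'a) set. code_params {0..<n} C n k (d + 1))"

end

theory Submission
  imports Defs "HOL-Library.FuncSet"
begin

interpretation fv: vector_space "fscale :: 'a::field \<Rightarrow> ('b \<Rightarrow> 'a) \<Rightarrow> ('b \<Rightarrow> 'a)"
  by unfold_locales (auto simp: fscale_def fun_eq_iff algebra_simps)

lemma fscale_apply[simp]: "fscale c v x = c * v x" by (simp add: fscale_def)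

lemma card_vanish:
  fixes S :: "'b set"
  assumes "finite S"
  shows "finite {f :: 'b \<Rightarrow> 'a::{zero,finite}. \<forall>x. x \<notin> S \<longrightarrow> f x = 0}"
    and "card {f :: 'b \<Rightarrow> 'a::{zero,finite}. \<forall>x. x \<notin> S \<longrightarrow> f x = 0} = CARD('a) ^ card S"
proof -
  let ?V = "{f :: 'b \<Rightarrow> 'a. \<forall>x. x \<notin> S \<longrightarrow> f x = 0}"
  have bij: "bij_betw (\<lambda>f. restrict f S) ?V (PiE S (\<lambda>_. UNIV))"
  proof (rule bij_betw_imageI)
    show "inj_on (\<lambda>f. restrict f S) ?V"
      by (auto simp: inj_on_def fun_eq_iff restrict_def) (metis)
    show "(\<lambda>f. restrict f S) ` ?V = PiE S (\<lambda>_. UNIV)"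
    proof safe
      fix g :: "'b \<Rightarrow> 'a" assume g: "g \<in> PiE S (\<lambda>_. UNIV)"
      show "g \<in> (\<lambda>f. restrict f S) ` ?V"
        by (rule image_eqI[of _ _ "\<lambda>x. if x \<in> S then g x else 0"])
           (use g in \<open>auto simp: restrict_def fun_eq_iff PiE_def extensional_def\<close>)
    qed auto
  qed
  have fin: "finite (PiE S (\<lambda>_. (UNIV::'a set)))" using assms by (simp add: finite_PiE)
  show "finite ?V" using bij_betw_finite[OF bij] fin by simp
  show "card ?V = CARD('a) ^ card S"
    using bij_betw_same_card[OF bij] by (simp add: card_PiE assms)
qed

lemma card_subspace:
  fixes S :: "('b \<Rightarrow> 'a::{field,finite}) set"
  assumes "fv.subspace S" "finite S"
  shows "card S = CARD('a) ^ fv.dim S"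
proof -
  obtain B where B: "B \<subseteq> S" "fv.independent B" "S \<subseteq> fv.span B" "card B = fv.dim S"
    using fv.basis_exists by blast
  have fB: "finite B" using B(1) assms(2) finite_subset by blast
  have SB: "fv.span B = S" using fv.span_subspace[OF B(1) B(3) assms(1)] .
  let ?F = "\<lambda>u. \<Sum>v\<in>B. fscale (u v) v"
  have img: "?F ` (PiE B (\<lambda>_. UNIV)) = S"
  proof -
    have "?F ` (PiE B (\<lambda>_. UNIV)) = range ?F"
    proof safe
      fix u show "?F u \<in> ?F ` (PiE B (\<lambda>_. UNIV))"
        by (rule image_eqI[of _ _ "restrict u B"]) (auto intro!: sum.cong)
    qed auto
    then show ?thesis using fv.span_finite[OF fB] SB by simp
  qed
  have inj: "inj_on ?F (PiE B (\<lambda>_. UNIV))"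
  proof (rule inj_onI)
    fix u w assume u: "u \<in> PiE B (\<lambda>_. UNIV)" and w: "w \<in> PiE B (\<lambda>_. UNIV)" and eq: "?F u = ?F w"
    have "(\<Sum>v\<in>B. fscale (u v - w v) v) = ?F u - ?F w"
      by (simp add: fv.scale_left_diff_distrib sum_subtractf)
    then have z: "(\<Sum>v\<in>B. fscale (u v - w v) v) = 0" using eq by simp
    have "\<forall>v\<in>B. u v - w v = 0"
    proof (rule ccontr)
      assume "\<not> (\<forall>v\<in>B. u v - w v = 0)"
      then have "fv.dependent B" using fv.dependent_finite[OF fB] z
        by (intro iffD2[OF fv.dependent_finite[OF fB]]) (rule exI[of _ "\<lambda>v. u v - w v"], auto)
      then show False using B(2) by simp
    qed
    then show "u = w" using u w by (auto simp: PiE_def extensional_def fun_eq_iff)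
  qed
  have "card S = card (PiE B (\<lambda>_. (UNIV::'a set)))"
    using card_image[OF inj] img by simp
  also have "\<dots> = CARD('a) ^ card B" by (simp add: card_PiE fB)
  finally show ?thesis using B(4) by simp
qed

lemma smult3_simp[simp]: "smult3 \<alpha> (a, b, c) = (\<lambda>i. \<alpha> * a i, \<lambda>i. \<alpha> * b i, \<lambda>i. \<alpha> * c i)"
  by (simp add: smult3_def)

lemma smult3_one[simp]: "smult3 (1::'a::monoid_mult) x = x"
  by (cases x) auto

lemma smult3_smult3[simp]: "smult3 (a::'a::semigroup_mult) (smult3 b x) = smult3 (a * b) x"
  by (cases x) (auto simp: mult.assoc)

lemma coord3_smult3[simp]: "coord3 (smult3 a x) s = a * coord3 x s"
  by (cases x) (auto simp: coord3_def)

lemma Delta_eq: "P \<subseteq> {1..m} \<Longrightarrow> Delta m P = {v. \<forall>i. i \<notin> P \<longrightarrow> v i = 0}"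
  by (auto simp: Delta_def vecs_def supp_def)

lemma card_vecs: "card (vecs m :: (nat \<Rightarrow> 'a::{zero,finite}) set) = CARD('a) ^ m"
  and finite_vecs: "finite (vecs m :: (nat \<Rightarrow> 'a::{zero,finite}) set)"
  using card_vanish[of "{1..m}"] by (simp_all add: vecs_def)

lemma card_Delta: "P \<subseteq> {1..m} \<Longrightarrow> card (Delta m P :: (nat \<Rightarrow> 'a::{zero,finite}) set) = CARD('a) ^ card P"
  and finite_Delta: "P \<subseteq> {1..m} \<Longrightarrow> finite (Delta m P :: (nat \<Rightarrow> 'a::{zero,finite}) set)"
  using card_vanish[of P] by (simp_all add: Delta_eq finite_subset)

lemma finite_Delta': "finite (Delta m P :: (nat \<Rightarrow> 'a::{zero,finite}) set)"
  using finite_vecs[of m] by (rule finite_subset[rotated]) (auto simp: Delta_def)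

lemma card_Delta_c: "P \<subseteq> {1..m} \<Longrightarrow>
   card (Delta_c m P :: (nat \<Rightarrow> 'a::{zero,finite}) set) = CARD('a) ^ m - CARD('a) ^ card P"
proof -
  assume P: "P \<subseteq> {1..m}"
  have "Delta m P \<subseteq> (vecs m :: (nat \<Rightarrow> 'a) set)" by (auto simp: Delta_def)
  then show ?thesis using P by (simp add: Delta_c_def card_Diff_subset finite_Delta card_vecs card_Delta)
qed

lemma N2_elim:
  assumes "x \<in> N2 m A B C"
  obtains w1 w2 w3 \<omega> where "x = (\<lambda>i. w2 i + \<omega> i, w3, w1)" "w1 \<in> Delta_c m A" "w2 \<in> Delta m B"
    "w3 \<in> Delta m C" "\<omega> \<in> {(\<lambda>i. 0), w1}"
proof -
  have "\<exists>w1 w2 w3 \<omega>. x = (\<lambda>i. w2 i + \<omega> i, w3, w1) \<and> w1 \<in> Delta_c m A \<and> w2 \<in> Delta m B \<and> w3 \<in> Delta m C \<and> \<omega> \<in> {(\<lambda>i. 0), w1}"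
    using assms unfolding N2_def by (rule CollectD)
  then obtain w1 w2 w3 \<omega> where "x = (\<lambda>i. w2 i + \<omega> i, w3, w1) \<and> w1 \<in> Delta_c m A \<and> w2 \<in> Delta m B \<and> w3 \<in> Delta m C \<and> \<omega> \<in> {(\<lambda>i. 0), w1}"
    by (elim exE)
  then show ?thesis using that by (elim conjE) 
qed

definition N2map :: "(nat \<Rightarrow> 'a) \<times> (nat \<Rightarrow> 'a) \<times> (nat \<Rightarrow> 'a) \<times> bool \<Rightarrow> ('a::comm_ring_1) vec3" where
  "N2map t = (case t of (w1, w2, w3, f) \<Rightarrow> (\<lambda>i. w2 i + (if f then w1 i else 0), w3, w1))"

lemma N2_image: "(N2 m A B C :: ('a::comm_ring_1) vec3 set) = N2map ` (Delta_c m A \<times> Delta m B \<times> Delta m C \<times> UNIV)"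
proof (intro equalityI subsetI)
  fix x :: "'a vec3" assume "x \<in> N2 m A B C"
  then obtain w1 w2 w3 \<omega> where x: "x = (\<lambda>i. w2 i + \<omega> i, w3, w1)" and
    h: "w1 \<in> Delta_c m A" "w2 \<in> Delta m B" "w3 \<in> Delta m C" "\<omega> \<in> {(\<lambda>i. 0), w1}"
    by (rule N2_elim)
  show "x \<in> N2map ` (Delta_c m A \<times> Delta m B \<times> Delta m C \<times> UNIV)"
  proof (cases "\<omega> = w1")
    case True then show ?thesis using h x
      by (intro image_eqI[of _ _ "(w1,w2,w3,True)"]) (auto simp: N2map_def)
  next
    case False then have "\<omega> = (\<lambda>i. 0)" using h by auto
    then show ?thesis using h x
      by (intro image_eqI[of _ _ "(w1,w2,w3,False)"]) (auto simp: N2map_def)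
  qed
next
  fix y :: "'a vec3" assume "y \<in> N2map ` (Delta_c m A \<times> Delta m B \<times> Delta m C \<times> UNIV)"
  then obtain w1 w2 w3 :: "nat \<Rightarrow> 'a" and f where h: "w1 \<in> Delta_c m A" "w2 \<in> Delta m B" "w3 \<in> Delta m C"
    and y: "y = N2map (w1, w2, w3, f)" by auto
  show "y \<in> N2 m A B C"
    unfolding N2_def N2map_def y
    apply simp
    apply (rule exI[of _ w2], rule exI[of _ "if f then w1 else (\<lambda>i. 0)"])
    using h by (auto simp: fun_eq_iff)
qed

lemma N2map_inj_aux:
  assumes "B \<subseteq> A"
    and h: "w1 \<in> Delta_c m A" "w2 \<in> Delta m B" 
    "w1' \<in> Delta_c m A" "w2' \<in> Delta m B"
    and eq: "N2map (w1, w2, w3, f) = (N2map (w1', w2', w3', f') :: ('a::comm_ring_1) vec3)"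
  shows "w1 = w1' \<and> w2 = w2' \<and> w3 = w3' \<and> f = f'"
proof -
  from eq have e1: "w1' = w1" "w3' = w3"
    and e2: "\<And>i. w2 i + (if f then w1 i else 0) = w2' i + (if f' then w1 i else 0)"
    by (auto simp: N2map_def fun_eq_iff)
  have ff: "f = f'"
  proof (rule ccontr)
    assume "f \<noteq> f'"
    then have w1e: "w1 i = (if f then w2' i - w2 i else w2 i - w2' i)" for i
      using e2[of i] \<open>f \<noteq> f'\<close> by (cases f) (simp_all add: eq_diff_eq add.commute)
    have "w2 i = 0" "w2' i = 0" if "i \<notin> B" for i
      using h(2,4) that by (auto simp: Delta_def supp_def)
    then have "\<forall>i. i \<notin> B \<longrightarrow> w1 i = 0" using w1e by simp
    then have "w1 \<in> Delta m A" using h(1) assms(1) by (auto simp: Delta_c_def Delta_def supp_def)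
    then show False using h(1) by (auto simp: Delta_c_def)
  qed
  then have "w2' = w2" using e2 by (auto simp: fun_eq_iff)
  then show ?thesis using e1 ff by simp
qed

lemma N2map_inj:
  assumes "B \<subseteq> A"
  shows "inj_on (N2map :: _ \<Rightarrow> ('a::comm_ring_1) vec3) (Delta_c m A \<times> Delta m B \<times> Delta m C \<times> UNIV)"
proof (rule inj_onI)
  fix x y assume x: "x \<in> Delta_c m A \<times> Delta m B \<times> Delta m C \<times> UNIV"
    and y: "y \<in> Delta_c m A \<times> Delta m B \<times> Delta m C \<times> UNIV" and eq: "(N2map x :: 'a vec3) = N2map y"
  obtain a b c d where xe: "x = (a,b,c,d)" by (cases x) auto
  obtain a' b' c' d' where ye: "y = (a',b',c',d')" by (cases y) auto
  show "x = y" using N2map_inj_aux[OF assms, of a m b a' b' c d c' d'] x y eq unfolding xe ye by simp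
qed

lemma card_N2:
  assumes "B \<subseteq> A" "A \<subseteq> {1..m}" "C \<subseteq> {1..m}"
  shows "card (N2 m A B C :: ('a::{comm_ring_1,finite}) vec3 set)
     = 2 * CARD('a) ^ (card B + card C) * (CARD('a) ^ m - CARD('a) ^ card A)"
    and "finite (N2 m A B C :: ('a::{comm_ring_1,finite}) vec3 set)"
proof -
  have "card (N2 m A B C :: 'a vec3 set) = card ((Delta_c m A :: (nat \<Rightarrow> 'a) set) \<times> (Delta m B :: (nat \<Rightarrow> 'a) set) \<times> (Delta m C :: (nat \<Rightarrow> 'a) set) \<times> (UNIV::bool set))"
    unfolding N2_image by (rule card_image[OF N2map_inj[OF assms(1)]])
  also have "\<dots> = (CARD('a) ^ m - CARD('a) ^ card A) * (CARD('a) ^ card B * (CARD('a) ^ card C * 2))"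
    using assms by (simp add: card_cartesian_product card_Delta_c card_Delta)
  finally show "card (N2 m A B C :: 'a vec3 set) = 2 * CARD('a) ^ (card B + card C) * (CARD('a) ^ m - CARD('a) ^ card A)"
    by (simp add: power_add algebra_simps)
  show "finite (N2 m A B C :: 'a vec3 set)" unfolding N2_image
    by (intro finite_imageI finite_cartesian_product finite_Delta') (auto simp: Delta_c_def finite_vecs)
qed

lemma N2_props:
  assumes "x \<in> N2 m A B C"
  shows "fst x \<in> vecs m" "fst (snd x) \<in> Delta m C" "snd (snd x) \<in> Delta_c m A"
  using assms unfolding N2_def Delta_c_def Delta_def vecs_def by auto

lemma N2_third_nz:
  assumes "x \<in> N2 m A B C"
  shows "\<exists>i \<in> {1..m}. i \<notin> A \<and> snd (snd x) i \<noteq> 0"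
proof -
  have w: "snd (snd x) \<in> vecs m" "\<not> supp (snd (snd x)) \<subseteq> A"
    using N2_props(3)[OF assms] unfolding Delta_c_def Delta_def by auto
  then obtain i where "snd (snd x) i \<noteq> 0" "i \<notin> A" unfolding supp_def by auto
  moreover then have "i \<in> {1..m}" using w(1) unfolding vecs_def by blast
  ultimately show ?thesis by blast
qed

lemma N2_smult:
  assumes "x \<in> N2 m A B C" "(\<alpha>::'a::field) \<noteq> 0"
  shows "smult3 \<alpha> x \<in> N2 m A B C"
proof -
  obtain w1 w2 w3 \<omega> where x: "x = (\<lambda>i. w2 i + \<omega> i, w3, w1)" and
    h: "w1 \<in> Delta_c m A" "w2 \<in> Delta m B" "w3 \<in> Delta m C" "\<omega> \<in> {(\<lambda>i. 0), w1}"
    using assms(1) by (rule N2_elim)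
  show ?thesis unfolding N2_def x smult3_simp
    apply (rule CollectI)
    apply (rule exI[of _ "\<lambda>i. \<alpha> * w1 i"], rule exI[of _ "\<lambda>i. \<alpha> * w2 i"], rule exI[of _ "\<lambda>i. \<alpha> * w3 i"],
           rule exI[of _ "\<lambda>i. \<alpha> * \<omega> i"])
    using h assms(2) by (auto simp: Delta_c_def Delta_def vecs_def supp_def algebra_simps)
qed

locale cfg =
  fixes m :: nat and A B C :: "nat set" and Nbar :: "('a::{field,finite}) vec3 set"
  assumes m2: "m \<ge> 2" and Ane: "A \<noteq> {}" and Bne: "B \<noteq> {}" and Cne: "C \<noteq> {}"
    and Csub: "C \<subseteq> {1..m}" and BA: "B \<subseteq> A" and Asub: "A \<subset> {1..m}"
    and reps: "is_proj_reps (N2 m A B C) Nbar"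
begin

lemma Nbar_sub: "Nbar \<subseteq> N2 m A B C"
  using reps by (simp add: is_proj_reps_def)

lemma finN2: "finite (N2 m A B C :: 'a vec3 set)"
  using card_N2(2)[OF BA _ Csub] Asub by blast

lemma finNbar: "finite Nbar"
  using finN2 Nbar_sub finite_subset by blast

lemma rep_ex: "x \<in> N2 m A B C \<Longrightarrow> \<exists>y \<alpha>. y \<in> Nbar \<and> \<alpha> \<noteq> 0 \<and> y = smult3 \<alpha> x"
  using reps unfolding is_proj_reps_def by blast

lemma reps_same:
  assumes "y \<in> Nbar" "z \<in> Nbar" "\<beta> \<noteq> 0" "z = smult3 \<beta> y"
  shows "z = y"
proof -
  have yN: "y \<in> N2 m A B C" using assms(1) Nbar_sub by blast
  then have "\<exists>!y'. y' \<in> Nbar \<and> (\<exists>\<alpha>. \<alpha> \<noteq> 0 \<and> y' = smult3 \<alpha> y)"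
    using reps unfolding is_proj_reps_def by blast
  moreover have "y \<in> Nbar \<and> (\<exists>\<alpha>. \<alpha> \<noteq> 0 \<and> y = smult3 \<alpha> y)"
    using assms(1) by (intro conjI exI[of _ 1]) auto
  moreover have "z \<in> Nbar \<and> (\<exists>\<alpha>. \<alpha> \<noteq> 0 \<and> z = smult3 \<alpha> y)"
    using assms by blast
  ultimately show ?thesis by blast
qed

lemma smult3_cancel_scalar:
  assumes "(y :: 'a vec3) \<in> N2 m A B C" "smult3 \<alpha> y = smult3 \<beta> y"
  shows "\<alpha> = \<beta>"
proof -
  obtain i where "snd (snd y) i \<noteq> 0" using N2_third_nz[OF assms(1)] by blast
  moreover have "\<alpha> * snd (snd y) i = \<beta> * snd (snd y) i"
    using assms(2) by (cases y) (auto simp: fun_eq_iff)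
  ultimately show ?thesis by (metis mult_right_cancel)
qed

lemma card_N2_Nbar: "card (N2 m A B C :: 'a vec3 set) = card Nbar * (CARD('a) - 1)"
proof -
  let ?G = "\<lambda>(y, \<alpha>). smult3 \<alpha> y"
  have inj: "inj_on ?G (Nbar \<times> (UNIV - {0::'a}))"
  proof (rule inj_onI)
    fix p p' assume p: "p \<in> Nbar \<times> (UNIV - {0::'a})" and p': "p' \<in> Nbar \<times> (UNIV - {0::'a})"
      and eqp: "?G p = ?G p'"
    obtain y \<alpha> where pe: "p = (y, \<alpha>)" by (cases p)
    obtain z \<beta> where pe': "p' = (z, \<beta>)" by (cases p')
    have h: "y \<in> Nbar" "(\<alpha>::'a) \<noteq> 0" "z \<in> Nbar" "\<beta> \<noteq> 0" using p p' pe pe' by auto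
    have eq: "smult3 \<alpha> y = smult3 \<beta> z" using eqp pe pe' by simp
    have "z = smult3 (inverse \<beta> * \<alpha>) y"
      using arg_cong[OF eq, of "smult3 (inverse \<beta>)"] h by simp
    then have zy: "z = y" using reps_same[OF h(1) h(3)] h by simp
    have "\<alpha> = \<beta>" using smult3_cancel_scalar[of y \<alpha> \<beta>] eq zy h(1) Nbar_sub by blast
    then show "p = p'" using zy pe pe' by simp
  qed
  have img: "?G ` (Nbar \<times> (UNIV - {0::'a})) = N2 m A B C"
  proof (intro equalityI subsetI)
    fix x :: "'a vec3" assume "x \<in> ?G ` (Nbar \<times> (UNIV - {0::'a}))"
    then obtain y \<alpha> where "y \<in> Nbar" "\<alpha> \<noteq> 0" "x = smult3 \<alpha> y" by auto
    then show "x \<in> N2 m A B C" by (metis N2_smult Nbar_sub subsetD)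
  next
    fix x :: "'a vec3" assume x: "x \<in> N2 m A B C"
    then obtain y \<alpha> where h: "y \<in> Nbar" "\<alpha> \<noteq> 0" "y = smult3 \<alpha> x" using rep_ex by blast
    then have "x = smult3 (inverse \<alpha>) y" by simp
    then show "x \<in> ?G ` (Nbar \<times> (UNIV - {0::'a}))" using h
      by (intro image_eqI[of _ _ "(y, inverse \<alpha>)"]) auto
  qed
  have "card (N2 m A B C :: 'a vec3 set) = card (Nbar \<times> (UNIV - {0::'a}))"
    using card_image[OF inj] img by simp
  also have "\<dots> = card Nbar * (CARD('a) - 1)"
    by (simp add: card_cartesian_product card_Diff_subset)
  finally show ?thesis .
qed

definition S0 :: "(nat \<times> nat) set" where "S0 = {1,2,3} \<times> {1..m}"

definition Phi :: "('a vec3 \<Rightarrow> 'a) \<Rightarrow> nat \<times> nat \<Rightarrow> 'a" where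
  "Phi c = (\<lambda>s. if s \<in> S0 then (\<Sum>x\<in>Nbar. c x * coord3 x s) else 0)"

definition V :: "('a vec3 \<Rightarrow> 'a) set" where "V = {c. \<forall>x. x \<notin> Nbar \<longrightarrow> c x = 0}"

lemma Phi_add: "Phi (c + d) = Phi c + Phi d"
  by (auto simp: Phi_def fun_eq_iff distrib_right sum.distrib)

lemma Phi_diff: "Phi (c - d) = Phi c - Phi d"
  by (auto simp: Phi_def fun_eq_iff left_diff_distrib sum_subtractf)

lemma Phi_scale: "Phi (fscale a c) = (\<lambda>s. a * Phi c s)"
  by (auto simp: Phi_def fun_eq_iff sum_distrib_left mult.assoc)

lemma Phi_zero: "Phi 0 = 0"
  by (auto simp: Phi_def fun_eq_iff)

lemma dual_iff: "dual_code Nbar (code_of m Nbar) = {c \<in> V. Phi c = 0}"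
proof (intro equalityI subsetI)
  fix c assume c: "c \<in> dual_code Nbar (code_of m Nbar)"
  then have cV: "c \<in> V" by (simp add: dual_code_def V_def)
  have "Phi c s = 0" for s
  proof (cases "s \<in> S0")
    case True
    let ?r = "\<lambda>x. if x \<in> Nbar then coord3 x s else 0"
    have "?r \<in> gen_rows m Nbar" using True unfolding gen_rows_def S0_def by (rule image_eqI[of _ _ s, rotated]) simp
    then have r: "?r \<in> code_of m Nbar" unfolding code_of_def by (rule fv.span_base)
    have all: "\<forall>c'\<in>code_of m Nbar. (\<Sum>x\<in>Nbar. c x * c' x) = 0" using c by (simp add: dual_code_def)
    have "(\<Sum>x\<in>Nbar. c x * ?r x) = 0" using bspec[OF all r] .
    moreover have "(\<Sum>x\<in>Nbar. c x * ?r x) = (\<Sum>x\<in>Nbar. c x * coord3 x s)" by (rule sum.cong) auto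
    ultimately show ?thesis using True by (simp add: Phi_def)
  next
    case False then show ?thesis by (simp add: Phi_def)
  qed
  then show "c \<in> {c \<in> V. Phi c = 0}" using cV by (simp add: fun_eq_iff)
next
  fix c assume c: "c \<in> {c \<in> V. Phi c = 0}"
  have rows: "(\<Sum>x\<in>Nbar. c x * r x) = 0" if rr: "r \<in> gen_rows m Nbar" for r
  proof -
    obtain s where s: "s \<in> S0" "r = (\<lambda>x. if x \<in> Nbar then coord3 x s else 0)"
      using rr unfolding gen_rows_def S0_def by (elim imageE) simp
    have "Phi c s = 0" using c by simp
    moreover have "(\<Sum>x\<in>Nbar. c x * r x) = (\<Sum>x\<in>Nbar. c x * coord3 x s)" using s(2) by (intro sum.cong) auto
    ultimately show ?thesis using s by (simp add: Phi_def)
  qed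
  have "(\<Sum>x\<in>Nbar. c x * c' x) = 0" if "c' \<in> code_of m Nbar" for c'
    using that unfolding code_of_def
  proof (induction rule: fv.span_induct_alt)
    case base then show ?case by simp
  next
    case (step a r y)
    have "(\<Sum>x\<in>Nbar. c x * fscale a r x + c x * y x) = a * (\<Sum>x\<in>Nbar. c x * r x) + (\<Sum>x\<in>Nbar. c x * y x)"
      by (simp add: sum.distrib sum_distrib_left algebra_simps)
    then show ?case using step rows by (simp add: distrib_left)
  qed
  then show "c \<in> dual_code Nbar (code_of m Nbar)" using c by (simp add: dual_code_def V_def)
qed

lemma dual_subspace: "fv.subspace {c \<in> V. Phi c = 0}"
  by (rule fv.subspaceI) (auto simp: V_def Phi_add Phi_scale Phi_zero fun_eq_iff)

end

lemma card_field_ge2: "CARD('a::{field,finite}) \<ge> 2"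
proof -
  have "card {0::'a, 1} = 2" by simp
  moreover have "card {0::'a, 1} \<le> CARD('a)" by (rule card_mono) auto
  ultimately show ?thesis by simp
qed

lemma sum_single:
  assumes "finite X" "y \<in> X"
  shows "(\<Sum>z\<in>X. (if z = y then (k::'a::comm_ring_1) else 0) * f z) = k * f y"
proof -
  have "(\<Sum>z\<in>X. (if z = y then k else 0) * f z) = (\<Sum>z\<in>X. if z = y then k * f z else 0)"
    by (rule sum.cong) auto
  also have "\<dots> = k * f y" using assms by (simp add: sum.delta)
  finally show ?thesis .
qed

lemma N2_intro:
  assumes "w1 \<in> Delta_c m A" "w2 \<in> Delta m B" "w3 \<in> Delta m C" "\<omega> \<in> {(\<lambda>i. 0), w1}"
  shows "(\<lambda>i. w2 i + \<omega> i, w3, w1) \<in> N2 m A B C"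
  unfolding N2_def mem_Collect_eq using assms
  by (intro exI[of _ w1] exI[of _ w2] exI[of _ w3] exI[of _ \<omega>]) simp

definition cv3 :: "nat \<Rightarrow> (nat \<Rightarrow> 'a::zero) \<Rightarrow> (nat \<Rightarrow> 'a) \<Rightarrow> (nat \<Rightarrow> 'a) \<Rightarrow> nat \<times> nat \<Rightarrow> 'a" where
  "cv3 m a b c = (\<lambda>s. if snd s \<in> {1..m} then (if fst s = 1 then a (snd s) else if fst s = 2 then b (snd s)
      else if fst s = 3 then c (snd s) else 0) else 0)"

lemma cv3_diff: "cv3 m (\<lambda>i. (a::nat\<Rightarrow>'a::ab_group_add) i - a' i) (\<lambda>i. b i - b' i) (\<lambda>i. c i - c' i) = cv3 m a b c - cv3 m a' b' c'"
  by (auto simp: fun_eq_iff cv3_def)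

context cfg
begin

definition S1 :: "(nat \<times> nat) set" where "S1 = {1,3} \<times> {1..m} \<union> {2} \<times> C"

definition W :: "(nat \<times> nat \<Rightarrow> 'a) set" where "W = {g. \<forall>s. s \<notin> S1 \<longrightarrow> g s = 0}"

lemma finite_S1: "finite S1" using Csub finite_subset by (auto simp: S1_def)

lemma card_S1: "card S1 = 2 * m + card C"
proof -
  have fC: "finite C" using Csub finite_subset by blast
  have "card S1 = card ({1,3::nat} \<times> {1..m}) + card ({2::nat} \<times> C)"
    unfolding S1_def by (rule card_Un_disjoint) (auto simp: fC)
  also have "\<dots> = 2 * m + card C" by (simp add: card_cartesian_product)
  finally show ?thesis .
qed

lemma finite_V: "finite V" and card_V: "card V = CARD('a) ^ card Nbar"
  using card_vanish[OF finNbar, where 'a='a] by (simp_all add: V_def)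

lemma finite_W: "finite W" and card_W: "card W = CARD('a) ^ (2 * m + card C)"
  using card_vanish[OF finite_S1, where 'a='a] by (simp_all add: W_def card_S1)

lemma img_add: "g \<in> Phi ` V \<Longrightarrow> h \<in> Phi ` V \<Longrightarrow> g + h \<in> Phi ` V"
proof -
  assume g: "g \<in> Phi ` V" and h: "h \<in> Phi ` V"
  from g obtain c where c: "c \<in> V" "g = Phi c" by (elim imageE) simp
  from h obtain d where d: "d \<in> V" "h = Phi d" by (elim imageE) simp
  show ?thesis by (rule image_eqI[of _ _ "c + d"]) (use c d in \<open>simp_all add: Phi_add V_def\<close>)
qed

lemma img_diff: "g \<in> Phi ` V \<Longrightarrow> h \<in> Phi ` V \<Longrightarrow> g - h \<in> Phi ` V"
proof -
  assume g: "g \<in> Phi ` V" and h: "h \<in> Phi ` V"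
  from g obtain c where c: "c \<in> V" "g = Phi c" by (elim imageE) simp
  from h obtain d where d: "d \<in> V" "h = Phi d" by (elim imageE) simp
  show ?thesis by (rule image_eqI[of _ _ "c - d"]) (use c d in \<open>simp_all add: Phi_diff V_def\<close>)
qed

lemma img_N2:
  assumes "(a, b, c) \<in> N2 m A B C"
  shows "cv3 m a b c \<in> Phi ` V"
proof -
  obtain y \<alpha> where h: "y \<in> Nbar" "\<alpha> \<noteq> 0" "y = smult3 \<alpha> (a, b, c)" using rep_ex[OF assms] by blast
  let ?c = "\<lambda>z. if z = y then inverse \<alpha> else 0"
  have cV: "?c \<in> V" using h(1) by (simp add: V_def)
  have "Phi ?c = cv3 m a b c"
  proof
    fix s
    show "Phi ?c s = cv3 m a b c s"
    proof (cases "s \<in> S0")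
      case True
      then have "Phi ?c s = inverse \<alpha> * coord3 y s"
        by (simp add: Phi_def sum_single[OF finNbar h(1)])
      also have "\<dots> = coord3 (a, b, c) s" using h(2) coord3_smult3[of \<alpha> "(a,b,c)" s] h(3) by simp
      also have "\<dots> = cv3 m a b c s" using True by (auto simp: coord3_def cv3_def S0_def)
      finally show ?thesis .
    next
      case False then show ?thesis by (cases s) (auto simp: Phi_def cv3_def S0_def)
    qed
  qed
  then show ?thesis using cV by (metis image_eqI)
qed

lemma t_ex: "\<exists>t. t \<in> {1..m} \<and> t \<notin> A" using Asub by blast

definition t0 :: nat where "t0 = (SOME t. t \<in> {1..m} \<and> t \<notin> A)"

lemma t0: "t0 \<in> {1..m}" "t0 \<notin> A" using someI_ex[OF t_ex] by (simp_all add: t0_def)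

definition et :: "nat \<Rightarrow> 'a" where "et = (\<lambda>k. if k = t0 then 1 else 0)"

lemma et_c: "et \<in> Delta_c m A"
  using t0 by (auto simp: et_def Delta_c_def Delta_def vecs_def supp_def)

lemma zero_B: "(\<lambda>i. 0::'a) \<in> Delta m B" by (simp add: Delta_def vecs_def supp_def)
lemma zero_C: "(\<lambda>i. 0::'a) \<in> Delta m C" by (simp add: Delta_def vecs_def supp_def)

lemma third_in: "w \<in> Delta_c m A \<Longrightarrow> cv3 m (\<lambda>i. 0) (\<lambda>i. 0) w \<in> Phi ` V"
proof -
  assume w: "w \<in> Delta_c m A"
  have "(\<lambda>i. 0 + 0, \<lambda>i. 0, w) \<in> N2 m A B C"
    using N2_intro[OF w zero_B zero_C, where \<omega>="\<lambda>i. 0"] by simp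
  then show ?thesis using img_N2 by simp
qed

lemma first_in_c: "w \<in> Delta_c m A \<Longrightarrow> cv3 m w (\<lambda>i. 0) (\<lambda>i. 0) \<in> Phi ` V"
proof -
  assume w: "w \<in> Delta_c m A"
  have "(\<lambda>i. 0 + w i, \<lambda>i. 0, w) \<in> N2 m A B C" using N2_intro[OF w zero_B zero_C, where \<omega>=w] by simp
  then have "cv3 m w (\<lambda>i. 0) w \<in> Phi ` V" using img_N2 by simp
  then have "cv3 m w (\<lambda>i. 0) w - cv3 m (\<lambda>i. 0) (\<lambda>i. 0) w \<in> Phi ` V" using img_diff third_in[OF w] by blast
  also have "cv3 m w (\<lambda>i. 0) w - cv3 m (\<lambda>i. 0) (\<lambda>i. 0) w = cv3 m w (\<lambda>i. 0) (\<lambda>i. 0)"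
    using cv3_diff[of m w "\<lambda>i. 0" "\<lambda>i. 0" "\<lambda>i. 0" w w] by simp
  finally show ?thesis .
qed

lemma vecs_split: "v \<in> vecs m \<Longrightarrow> v \<in> Delta_c m A \<or> (v \<in> Delta m A \<and> (\<lambda>i. v i + et i) \<in> Delta_c m A)"
proof -
  assume v: "v \<in> vecs m"
  show ?thesis
  proof (cases "v \<in> Delta_c m A")
    case False
    then have vA: "v \<in> Delta m A" using v by (simp add: Delta_c_def)
    then have "v t0 = 0" using t0 by (auto simp: Delta_def supp_def)
    then have "t0 \<in> supp (\<lambda>i. v i + et i)" by (simp add: supp_def et_def)
    then have "\<not> supp (\<lambda>i. v i + et i) \<subseteq> A" using t0 by blast
    moreover have "(\<lambda>i. v i + et i) \<in> vecs m" using v t0 by (auto simp: vecs_def et_def)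
    ultimately show ?thesis using vA by (simp add: Delta_c_def Delta_def)
  qed simp
qed

lemma first_in: "v \<in> vecs m \<Longrightarrow> cv3 m v (\<lambda>i. 0) (\<lambda>i. 0) \<in> Phi ` V"
proof -
  assume v: "v \<in> vecs m"
  show ?thesis
  proof (cases "v \<in> Delta_c m A")
    case True then show ?thesis by (rule first_in_c)
  next
    case False
    then have h: "(\<lambda>i. v i + et i) \<in> Delta_c m A" using vecs_split[OF v] by blast
    have "cv3 m (\<lambda>i. v i + et i) (\<lambda>i. 0) (\<lambda>i. 0) - cv3 m et (\<lambda>i. 0) (\<lambda>i. 0) \<in> Phi ` V"
      using img_diff first_in_c[OF h] first_in_c[OF et_c] by blast
    also have "cv3 m (\<lambda>i. v i + et i) (\<lambda>i. 0) (\<lambda>i. 0) - cv3 m et (\<lambda>i. 0) (\<lambda>i. 0) = cv3 m v (\<lambda>i. 0) (\<lambda>i. 0)"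
      using cv3_diff[of m "\<lambda>i. v i + et i" et "\<lambda>i. 0" "\<lambda>i. 0" "\<lambda>i. 0" "\<lambda>i. 0"] by simp
    finally show ?thesis .
  qed
qed

lemma third_in': "v \<in> vecs m \<Longrightarrow> cv3 m (\<lambda>i. 0) (\<lambda>i. 0) v \<in> Phi ` V"
proof -
  assume v: "v \<in> vecs m"
  show ?thesis
  proof (cases "v \<in> Delta_c m A")
    case True then show ?thesis by (rule third_in)
  next
    case False
    then have h: "(\<lambda>i. v i + et i) \<in> Delta_c m A" using vecs_split[OF v] by blast
    have "cv3 m (\<lambda>i. 0) (\<lambda>i. 0) (\<lambda>i. v i + et i) - cv3 m (\<lambda>i. 0) (\<lambda>i. 0) et \<in> Phi ` V"
      using img_diff third_in[OF h] third_in[OF et_c] by blast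
    also have "cv3 m (\<lambda>i. 0) (\<lambda>i. 0) (\<lambda>i. v i + et i) - cv3 m (\<lambda>i. 0) (\<lambda>i. 0) et = cv3 m (\<lambda>i. 0) (\<lambda>i. 0) v"
      using cv3_diff[of m "\<lambda>i. 0" "\<lambda>i. 0" "\<lambda>i. 0" "\<lambda>i. 0" "\<lambda>i. v i + et i" et] by simp
    finally show ?thesis .
  qed
qed

lemma second_in: "v \<in> Delta m C \<Longrightarrow> cv3 m (\<lambda>i. 0) v (\<lambda>i. 0) \<in> Phi ` V"
proof -
  assume v: "v \<in> Delta m C"
  have "(\<lambda>i. 0 + 0, v, et) \<in> N2 m A B C" using N2_intro[OF et_c zero_B v, where \<omega>="\<lambda>i. 0"] by simp
  then have "cv3 m (\<lambda>i. 0) v et \<in> Phi ` V" using img_N2 by simp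
  then have "cv3 m (\<lambda>i. 0) v et - cv3 m (\<lambda>i. 0) (\<lambda>i. 0) et \<in> Phi ` V" using img_diff third_in[OF et_c] by blast
  also have "cv3 m (\<lambda>i. 0) v et - cv3 m (\<lambda>i. 0) (\<lambda>i. 0) et = cv3 m (\<lambda>i. 0) v (\<lambda>i. 0)"
    using cv3_diff[of m "\<lambda>i. 0" "\<lambda>i. 0" v "\<lambda>i. 0" et et] by simp
  finally show ?thesis .
qed

lemma img_eq: "Phi ` V = W"
proof (intro equalityI subsetI)
  fix g assume "g \<in> Phi ` V"
  then obtain c where g: "g = Phi c" by blast
  have "g s = 0" if s: "s \<notin> S1" for s
  proof (cases "s \<in> S0")
    case False then show ?thesis by (simp add: g Phi_def)
  next
    case True
    then obtain i where si: "s = (2, i)" "i \<notin> C" using s by (auto simp: S0_def S1_def)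
    have "coord3 x s = 0" if "x \<in> Nbar" for x
    proof -
      have "fst (snd x) \<in> Delta m C" using N2_props(2) that Nbar_sub by blast
      then have "fst (snd x) i = 0" using si(2) by (auto simp: Delta_def supp_def)
      then show ?thesis using si(1) by (cases x) (simp add: coord3_def)
    qed
    then show ?thesis by (simp add: g Phi_def)
  qed
  then show "g \<in> W" by (simp add: W_def)
next
  fix g assume g: "g \<in> W"
  let ?g1 = "\<lambda>i. g (1, i)" and ?g2 = "\<lambda>i. g (2, i)" and ?g3 = "\<lambda>i. g (3, i)"
  have g1: "?g1 \<in> vecs m" and g3: "?g3 \<in> vecs m" using g by (auto simp: W_def S1_def vecs_def)
  have g2: "?g2 \<in> Delta m C" using g Csub by (auto simp: W_def S1_def Delta_eq)
  have "g = cv3 m ?g1 (\<lambda>i. 0) (\<lambda>i. 0) + cv3 m (\<lambda>i. 0) ?g2 (\<lambda>i. 0) + cv3 m (\<lambda>i. 0) (\<lambda>i. 0) ?g3"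
  proof
    fix s :: "nat \<times> nat"
    obtain j i where s: "s = (j, i)" by (cases s)
    show "g s = (cv3 m ?g1 (\<lambda>i. 0) (\<lambda>i. 0) + cv3 m (\<lambda>i. 0) ?g2 (\<lambda>i. 0) + cv3 m (\<lambda>i. 0) (\<lambda>i. 0) ?g3) s"
    proof (cases "i \<in> {1..m} \<and> j \<in> {1,2,3}")
      case True then show ?thesis unfolding s by (auto simp: cv3_def)
    next
      case False
      then have "s \<notin> S1" unfolding s S1_def using Csub by auto
      then have "g s = 0" using g unfolding W_def by blast
      then show ?thesis using False unfolding s by (auto simp: cv3_def)
    qed
  qed
  moreover have "cv3 m ?g1 (\<lambda>i. 0) (\<lambda>i. 0) + cv3 m (\<lambda>i. 0) ?g2 (\<lambda>i. 0) + cv3 m (\<lambda>i. 0) (\<lambda>i. 0) ?g3 \<in> Phi ` V"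
    by (rule img_add[OF img_add[OF first_in[OF g1] second_in[OF g2]] third_in'[OF g3]])
  ultimately show "g \<in> Phi ` V" by simp
qed

definition K where "K = {c \<in> V. Phi c = 0}"

lemma card_V_WK: "card V = card W * card K"
proof -
  define \<sigma> where "\<sigma> g = (SOME c. c \<in> V \<and> Phi c = g)" for g
  have \<sigma>: "\<sigma> g \<in> V" "Phi (\<sigma> g) = g" if "g \<in> W" for g
  proof -
    have "g \<in> Phi ` V" using that img_eq by simp
    then have "\<exists>c. c \<in> V \<and> Phi c = g" by (elim imageE) auto
    then have "\<sigma> g \<in> V \<and> Phi (\<sigma> g) = g" unfolding \<sigma>_def by (rule someI_ex)
    then show "\<sigma> g \<in> V" "Phi (\<sigma> g) = g" by auto
  qed
  have Vdiff: "c - d \<in> V" if "c \<in> V" "d \<in> V" for c d using that by (simp add: V_def)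
  have Vadd: "c + d \<in> V" if "c \<in> V" "d \<in> V" for c d using that by (simp add: V_def)
  let ?h = "\<lambda>c. (Phi c, c - \<sigma> (Phi c))"
  have inj: "inj_on ?h V"
  proof (rule inj_onI)
    fix c d assume "c \<in> V" "d \<in> V" and eq: "?h c = ?h d"
    then have e: "Phi c = Phi d" "c - \<sigma> (Phi c) = d - \<sigma> (Phi d)" by auto
    have "c = (c - \<sigma> (Phi c)) + \<sigma> (Phi c)" by simp
    also have "\<dots> = (d - \<sigma> (Phi d)) + \<sigma> (Phi d)" using e by simp
    also have "\<dots> = d" by simp
    finally show "c = d" .
  qed
  have img: "?h ` V = W \<times> K"
  proof (intro equalityI subsetI)
    fix p assume "p \<in> ?h ` V"
    then obtain c where c: "c \<in> V" "p = ?h c" by (elim imageE) simp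
    have "Phi c \<in> Phi ` V" using c(1) by (rule imageI)
    then have PW: "Phi c \<in> W" using img_eq by simp
    have "c - \<sigma> (Phi c) \<in> K" using Vdiff[OF c(1) \<sigma>(1)[OF PW]] \<sigma>(2)[OF PW]
      by (simp add: K_def Phi_diff)
    then show "p \<in> W \<times> K" using c(2) PW by simp
  next
    fix p assume "p \<in> W \<times> K"
    then obtain g k where p: "p = (g, k)" "g \<in> W" "k \<in> K" by (cases p) simp
    have k: "k \<in> V" "Phi k = 0" using p(3) by (auto simp: K_def)
    have "\<sigma> g + k \<in> V" using Vadd[OF \<sigma>(1)[OF p(2)] k(1)] .
    moreover have "Phi (\<sigma> g + k) = g" using \<sigma>(2)[OF p(2)] k(2) by (simp add: Phi_add)
    ultimately show "p \<in> ?h ` V" using p(1) by (intro image_eqI[of _ _ "\<sigma> g + k"]) auto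
  qed
  have "card V = card (W \<times> K)" using card_image[OF inj] img by simp
  then show ?thesis by (simp add: card_cartesian_product)
qed

lemma K_eq: "dual_code Nbar (code_of m Nbar) = K"
  using dual_iff by (simp add: K_def)

lemma finite_K: "finite K" using finite_V by (rule finite_subset[rotated]) (auto simp: K_def)

lemma dim_K: "fv.dim K = card Nbar - (2 * m + card C)"
proof -
  have "CARD('a) ^ card Nbar = CARD('a) ^ (2 * m + card C) * CARD('a) ^ fv.dim K"
    using card_V_WK card_V card_W card_subspace[OF dual_subspace[folded K_def] finite_K] by simp
  then have "CARD('a) ^ card Nbar = CARD('a) ^ (2 * m + card C + fv.dim K)" by (simp add: power_add)
  then have "card Nbar = 2 * m + card C + fv.dim K"
    using card_field_ge2[where 'a='a] by (simp add: power_inject_exp)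
  then show ?thesis by simp
qed

end

lemma card2_elems: "CARD('a::{field,finite}) = 2 \<Longrightarrow> (x::'a) = 0 \<or> x = 1"
proof -
  assume c: "CARD('a) = 2"
  have "{0::'a, 1} = UNIV"
    by (rule card_subset_eq) (auto simp: c)
  then show ?thesis by auto
qed

lemma card2_one_one: "CARD('a::{field,finite}) = 2 \<Longrightarrow> (1::'a) + 1 = 0"
proof -
  assume c: "CARD('a) = 2"
  have "(1::'a) + 1 \<noteq> 1" by (metis add_cancel_left_right one_neq_zero)
  then show ?thesis using card2_elems[OF c, of "1 + 1"] by blast
qed

context cfg
begin

lemma N2_coord_out:
  assumes "x \<in> N2 m A B C" "i \<notin> {1..m}"
  shows "fst x i = 0" "fst (snd x) i = 0" "snd (snd x) i = 0"
  using N2_props[OF assms(1)] assms(2) by (auto simp: vecs_def Delta_def Delta_c_def)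

lemma N2_eq_coords:
  assumes x: "x \<in> N2 m A B C" and y: "y \<in> N2 m A B C"
    and h: "\<forall>s\<in>S0. coord3 y s = \<beta> * coord3 x s"
  shows "y = smult3 \<beta> x"
proof -
  obtain a b c where xe: "x = (a, b, c)" by (cases x)
  obtain a' b' c' where ye: "y = (a', b', c')" by (cases y)
  have "a' i = \<beta> * a i \<and> b' i = \<beta> * b i \<and> c' i = \<beta> * c i" for i
  proof (cases "i \<in> {1..m}")
    case True
    then have "(1, i) \<in> S0" "(2, i) \<in> S0" "(3, i) \<in> S0" by (auto simp: S0_def)
    then show ?thesis using h by (auto simp: xe ye coord3_def)
  next
    case False
    then show ?thesis using N2_coord_out[OF x False] N2_coord_out[OF y False] by (simp add: xe ye)
  qed
  then show ?thesis by (simp add: xe ye fun_eq_iff)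
qed

lemma K_sum_T:
  assumes c: "c \<in> K" and s: "s \<in> S0"
  shows "(\<Sum>x\<in>{x. c x \<noteq> 0}. c x * coord3 x s) = 0"
proof -
  have cV: "c \<in> V" "Phi c = 0" using c by (auto simp: K_def)
  have sub: "{x. c x \<noteq> 0} \<subseteq> Nbar" using cV(1) by (auto simp: V_def)
  have "(\<Sum>x\<in>{x. c x \<noteq> 0}. c x * coord3 x s) = (\<Sum>x\<in>Nbar. c x * coord3 x s)"
    by (rule sum.mono_neutral_left[OF finNbar sub]) auto
  also have "\<dots> = Phi c s" using s by (simp add: Phi_def)
  finally show ?thesis using cV(2) by simp
qed

lemma weight_ge3:
  assumes c: "c \<in> K" and nz: "\<exists>x. c x \<noteq> 0"
  shows "weight c \<ge> 3"
proof -
  let ?T = "{x. c x \<noteq> 0}"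
  have sub: "?T \<subseteq> Nbar" using c by (auto simp: K_def V_def)
  have fT: "finite ?T" using finite_subset[OF sub finNbar] .
  have ne: "?T \<noteq> {}" using nz by auto
  have n1: "card ?T \<noteq> 1"
  proof
    assume "card ?T = 1"
    then obtain y where Ty: "?T = {y}" by (auto simp: card_Suc_eq)
    have yN: "y \<in> N2 m A B C" using sub Ty Nbar_sub by blast
    obtain i where i: "i \<in> {1..m}" "snd (snd y) i \<noteq> 0" using N2_third_nz[OF yN] by blast
    have s: "(3, i) \<in> S0" using i by (simp add: S0_def)
    have "c y * coord3 y (3, i) = 0" using K_sum_T[OF c s] Ty by simp
    moreover have "c y \<noteq> 0" using Ty by auto
    moreover have "coord3 y (3, i) = snd (snd y) i" by (cases y) (simp add: coord3_def)
    ultimately show False using i by simp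
  qed
  have n2: "card ?T \<noteq> 2"
  proof
    assume "card ?T = 2"
    then obtain y z where Tyz: "?T = {y, z}" "y \<noteq> z" by (auto simp: card_2_iff)
    have yz: "y \<in> Nbar" "z \<in> Nbar" using sub Tyz by auto
    have cy: "c y \<noteq> 0" and cz: "c z \<noteq> 0" using Tyz by auto
    have "\<forall>s\<in>S0. coord3 z s = (- c y / c z) * coord3 y s"
    proof
      fix s assume s: "s \<in> S0"
      have "c y * coord3 y s + c z * coord3 z s = 0" using K_sum_T[OF c s] Tyz by simp
      then have "c z * coord3 z s = - (c y * coord3 y s)" by (simp add: eq_neg_iff_add_eq_0 add.commute)
      then show "coord3 z s = (- c y / c z) * coord3 y s" using cz
        by (simp add: field_simps)
    qed
    then have "z = smult3 (- c y / c z) y"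
      using N2_eq_coords yz Nbar_sub by blast
    then have "z = y" using reps_same[OF yz, of "- (c y / c z)"] cy cz by simp
    then show False using Tyz by simp
  qed
  have "card ?T \<noteq> 0" using fT ne by simp
  then show ?thesis using n1 n2 unfolding weight_def by linarith
qed

lemma weight_ne3_q2:
  assumes q2: "CARD('a) = 2" and cA: "card A = m - 1"
    and c: "c \<in> K"
  shows "weight c \<noteq> 3"
proof
  assume w3: "weight c = 3"
  let ?T = "{x. c x \<noteq> 0}"
  have "{1..m} - A = {t0}"
  proof -
    have "A \<subseteq> {1..m}" using Asub by blast
    then have "card ({1..m} - A) = card {1..m} - card A" by (intro card_Diff_subset) (auto intro: finite_subset)
    then have "card ({1..m} - A) = 1" using cA m2 by simp
    then obtain u where "{1..m} - A = {u}" by (auto simp: card_Suc_eq)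
    then show ?thesis using t0 by auto
  qed
  then have uniq: "i \<in> {1..m} \<Longrightarrow> i \<notin> A \<Longrightarrow> i = t0" for i by blast
  have one: "c x * coord3 x (3, t0) = 1" if "x \<in> ?T" for x
  proof -
    have "x \<in> Nbar" using that c unfolding K_def V_def by blast
    then have "x \<in> N2 m A B C" using Nbar_sub by blast
    then obtain i where i: "i \<in> {1..m}" "i \<notin> A" "snd (snd x) i \<noteq> 0" using N2_third_nz by blast
    have "coord3 x (3, t0) = snd (snd x) t0" by (cases x) (simp add: coord3_def)
    moreover have "i = t0" using uniq i by blast
    moreover have "snd (snd x) t0 = 0 \<or> snd (snd x) t0 = 1" using card2_elems[OF q2] by blast
    ultimately have "coord3 x (3, t0) = 1" using i by auto
    moreover have "c x = 1" using that card2_elems[OF q2] by auto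
    ultimately show ?thesis by simp
  qed
  have s: "(3, t0) \<in> S0" using t0 by (simp add: S0_def)
  have "(\<Sum>x\<in>?T. c x * coord3 x (3, t0)) = (\<Sum>x\<in>?T. (1::'a))" by (rule sum.cong) (use one in auto)
  also have "\<dots> = of_nat 3" using w3 by (simp add: weight_def)
  also have "\<dots> = (1::'a)" using card2_one_one[OF q2] by (simp add: numeral_3_eq_3 algebra_simps)
  finally show False using K_sum_T[OF c s] by simp
qed

definition rep :: "'a vec3 \<Rightarrow> 'a vec3" where
  "rep x = (SOME y. y \<in> Nbar \<and> (\<exists>\<alpha>. \<alpha> \<noteq> 0 \<and> y = smult3 \<alpha> x))"

definition al :: "'a vec3 \<Rightarrow> 'a" where
  "al x = (SOME \<alpha>. \<alpha> \<noteq> 0 \<and> rep x = smult3 \<alpha> x)"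

lemma rep_al:
  assumes "x \<in> N2 m A B C"
  shows "rep x \<in> Nbar" "al x \<noteq> 0" "rep x = smult3 (al x) x"
proof -
  have "\<exists>y. y \<in> Nbar \<and> (\<exists>\<alpha>. \<alpha> \<noteq> 0 \<and> y = smult3 \<alpha> x)" using rep_ex[OF assms] by blast
  then have r: "rep x \<in> Nbar \<and> (\<exists>\<alpha>. \<alpha> \<noteq> 0 \<and> rep x = smult3 \<alpha> x)" unfolding rep_def by (rule someI_ex)
  then show "rep x \<in> Nbar" by simp
  have ex: "\<exists>\<alpha>. \<alpha> \<noteq> 0 \<and> rep x = smult3 \<alpha> x" using r by (rule conjunct2)
  have "al x \<noteq> 0 \<and> rep x = smult3 (al x) x" unfolding al_def by (rule someI_ex[OF ex])
  then show "al x \<noteq> 0" "rep x = smult3 (al x) x" by simp_all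
qed

definition nonprop :: "'a vec3 \<Rightarrow> 'a vec3 \<Rightarrow> bool" where
  "nonprop x y \<longleftrightarrow> (\<forall>\<beta>. \<beta> \<noteq> 0 \<longrightarrow> y \<noteq> smult3 \<beta> x)"

lemma exists_word:
  assumes T: "finite T" "T \<subseteq> N2 m A B C" "T \<noteq> {}"
    and np: "\<And>x y. x \<in> T \<Longrightarrow> y \<in> T \<Longrightarrow> x \<noteq> y \<Longrightarrow> nonprop x y"
    and lnz: "\<And>x. x \<in> T \<Longrightarrow> l x \<noteq> 0"
    and rel: "\<And>s. s \<in> S0 \<Longrightarrow> (\<Sum>x\<in>T. l x * coord3 x s) = 0"
  shows "\<exists>c\<in>K. (\<exists>x. c x \<noteq> 0) \<and> weight c = card T"
proof -
  have inj: "inj_on rep T"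
  proof (rule inj_onI, rule ccontr)
    fix x y assume x: "x \<in> T" and y: "y \<in> T" and eq: "rep x = rep y" and ne: "x \<noteq> y"
    have xN: "x \<in> N2 m A B C" and yN: "y \<in> N2 m A B C" using x y T by auto
    have "smult3 (al x) x = smult3 (al y) y" using eq rep_al[OF xN] rep_al[OF yN] by simp
    then have "smult3 (inverse (al y)) (smult3 (al x) x) = smult3 (inverse (al y)) (smult3 (al y) y)" by simp
    then have "y = smult3 (inverse (al y) * al x) x" using rep_al(2)[OF yN] by simp
    moreover have "inverse (al y) * al x \<noteq> 0" using rep_al(2)[OF xN] rep_al(2)[OF yN] by simp
    ultimately show False using np[OF x y ne] by (simp add: nonprop_def)
  qed
  define c where "c z = (if z \<in> rep ` T then l (inv_into T rep z) * inverse (al (inv_into T rep z)) else 0)" for z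
  have crep: "c (rep x) = l x * inverse (al x)" if "x \<in> T" for x
    using that inj by (simp add: c_def)
  have repN: "rep ` T \<subseteq> Nbar" using T rep_al by auto
  have cV: "c \<in> V" using repN by (auto simp: V_def c_def)
  have "Phi c s = 0" for s
  proof (cases "s \<in> S0")
    case True
    have "(\<Sum>z\<in>Nbar. c z * coord3 z s) = (\<Sum>z\<in>rep ` T. c z * coord3 z s)"
      by (rule sum.mono_neutral_right[OF finNbar repN]) (auto simp: c_def)
    also have "\<dots> = (\<Sum>x\<in>T. c (rep x) * coord3 (rep x) s)" by (rule sum.reindex[OF inj, unfolded comp_def])
    also have "\<dots> = (\<Sum>x\<in>T. l x * coord3 x s)"
    proof (rule sum.cong[OF refl])
      fix x assume x: "x \<in> T"
      then have xN: "x \<in> N2 m A B C" using T by auto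
      have "coord3 (rep x) s = al x * coord3 x s" using rep_al(3)[OF xN] by simp
      then show "c (rep x) * coord3 (rep x) s = l x * coord3 x s"
        using crep[OF x] rep_al(2)[OF xN] by simp
    qed
    also have "\<dots> = 0" using rel[OF True] .
    finally show ?thesis using True by (simp add: Phi_def)
  next
    case False then show ?thesis by (simp add: Phi_def)
  qed
  then have cK: "c \<in> K" using cV by (simp add: K_def fun_eq_iff)
  have supp: "{z. c z \<noteq> 0} = rep ` T"
  proof (intro equalityI subsetI)
    fix z assume "z \<in> {z. c z \<noteq> 0}" then show "z \<in> rep ` T" by (auto simp: c_def split: if_splits)
  next
    fix z assume "z \<in> rep ` T"
    then obtain x where x: "x \<in> T" "z = rep x" by blast
    then have xN: "x \<in> N2 m A B C" using T by auto
    show "z \<in> {z. c z \<noteq> 0}" using crep[OF x(1)] x lnz[OF x(1)] rep_al(2)[OF xN] by simp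
  qed
  have "weight c = card T" unfolding weight_def supp using card_image[OF inj] .
  moreover have "\<exists>x. c x \<noteq> 0"
  proof -
    obtain x0 where "x0 \<in> T" using T(3) by blast
    then have "rep x0 \<in> {z. c z \<noteq> 0}" unfolding supp by blast
    then show ?thesis by blast
  qed
  ultimately show ?thesis using cK by blast
qed

end

definition uv :: "nat \<Rightarrow> nat \<Rightarrow> 'a::{zero,one}" where "uv i = (\<lambda>k. if k = i then 1 else 0)"

lemma uv_apply: "uv i k = (if k = i then 1 else 0)" by (simp add: uv_def)

lemma neq2: "fst (snd a) k \<noteq> fst (snd b) k \<Longrightarrow> a \<noteq> b" by auto
lemma neq3: "snd (snd a) k \<noteq> snd (snd b) k \<Longrightarrow> a \<noteq> b" by auto

context cfg
begin

lemma nonprop_I: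
  assumes "\<And>\<beta>. \<beta> \<noteq> 0 \<Longrightarrow> \<exists>i. fst (snd y) i \<noteq> \<beta> * fst (snd x) i \<or> snd (snd y) i \<noteq> \<beta> * snd (snd x) i"
  shows "nonprop x y"
  unfolding nonprop_def
proof (intro allI impI)
  fix \<beta> :: 'a assume b: "\<beta> \<noteq> 0"
  obtain i where i: "fst (snd y) i \<noteq> \<beta> * fst (snd x) i \<or> snd (snd y) i \<noteq> \<beta> * snd (snd x) i"
    using assms[OF b] by blast
  show "y \<noteq> smult3 \<beta> x"
  proof
    assume "y = smult3 \<beta> x"
    then show False using i by (cases x) auto
  qed
qed

lemma nonprop_q2: "CARD('a) = 2 \<Longrightarrow> x \<noteq> y \<Longrightarrow> nonprop x y"
proof -
  assume q: "CARD('a) = 2" and ne: "x \<noteq> y"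
  show "nonprop x y" unfolding nonprop_def
  proof (intro allI impI)
    fix \<beta> :: 'a assume "\<beta> \<noteq> 0"
    then have "\<beta> = 1" using card2_elems[OF q, of \<beta>] by blast
    then show "y \<noteq> smult3 \<beta> x" using ne by simp
  qed
qed

lemma N2_simple:
  assumes "(w1 :: nat \<Rightarrow> 'a) \<in> Delta_c m A" "w3 \<in> Delta m C"
  shows "(\<lambda>i. 0, w3, w1) \<in> N2 m A B C"
  using N2_intro[OF assms(1) zero_B assms(2), where \<omega>="\<lambda>i. 0"] by simp

lemma uv_C: "c \<in> C \<Longrightarrow> (uv c :: nat \<Rightarrow> 'a) \<in> Delta m C"
proof -
  assume c: "c \<in> C"
  then have "c \<in> {1..m}" using Csub by blast
  then show ?thesis using c unfolding Delta_def vecs_def supp_def uv_def by auto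
qed

lemma vec_c: "(v :: nat \<Rightarrow> 'a) \<in> vecs m \<Longrightarrow> i \<notin> A \<Longrightarrow> v i \<noteq> 0 \<Longrightarrow> v \<in> Delta_c m A"
proof -
  assume v: "v \<in> vecs m" and i: "i \<notin> A" "v i \<noteq> 0"
  then have "\<not> supp v \<subseteq> A" unfolding supp_def by blast
  then show ?thesis using v unfolding Delta_c_def Delta_def by blast
qed

lemma uv_c: "i \<in> {1..m} \<Longrightarrow> i \<notin> A \<Longrightarrow> (uv i :: nat \<Rightarrow> 'a) \<in> Delta_c m A"
  by (rule vec_c[of _ i]) (auto simp: vecs_def uv_def)

lemma exists_word3:
  fixes x1 x2 x3 :: "'a vec3"
  assumes N: "x1 \<in> N2 m A B C" "x2 \<in> N2 m A B C" "x3 \<in> N2 m A B C"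
    and d: "x1 \<noteq> x2" "x1 \<noteq> x3" "x2 \<noteq> x3"
    and np: "\<And>x y. x \<in> {x1, x2, x3} \<Longrightarrow> y \<in> {x1, x2, x3} \<Longrightarrow> x \<noteq> y \<Longrightarrow> nonprop x y"
    and l: "l1 \<noteq> 0" "l2 \<noteq> 0" "l3 \<noteq> 0"
    and rel: "\<And>s. s \<in> S0 \<Longrightarrow> l1 * coord3 x1 s + l2 * coord3 x2 s + l3 * coord3 x3 s = 0"
  shows "\<exists>c\<in>K. (\<exists>x. c x \<noteq> 0) \<and> weight c = 3"
proof -
  define lf where "lf x = (if x = x1 then l1 else if x = x2 then l2 else l3)" for x
  have "\<exists>c\<in>K. (\<exists>x. c x \<noteq> 0) \<and> weight c = card {x1, x2, x3}"
  proof (rule exists_word[where l = lf])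
    show "finite {x1, x2, x3}" by simp
    show "{x1, x2, x3} \<subseteq> N2 m A B C" using N by simp
    show "{x1, x2, x3} \<noteq> {}" by simp
    show "\<And>x y. x \<in> {x1, x2, x3} \<Longrightarrow> y \<in> {x1, x2, x3} \<Longrightarrow> x \<noteq> y \<Longrightarrow> nonprop x y" by (rule np)
    show "\<And>x. x \<in> {x1, x2, x3} \<Longrightarrow> lf x \<noteq> 0" using l by (auto simp: lf_def)
    show "(\<Sum>x\<in>{x1, x2, x3}. lf x * coord3 x s) = 0" if "s \<in> S0" for s
      using rel[OF that] d by (simp add: lf_def add.assoc)
  qed
  moreover have "card {x1, x2, x3} = 3" using d by simp
  ultimately show ?thesis by simp
qed

lemma exists_word4:
  fixes x1 x2 x3 x4 :: "'a vec3"
  assumes q2: "CARD('a) = 2"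
    and N: "x1 \<in> N2 m A B C" "x2 \<in> N2 m A B C" "x3 \<in> N2 m A B C" "x4 \<in> N2 m A B C"
    and d: "x1 \<noteq> x2" "x1 \<noteq> x3" "x1 \<noteq> x4" "x2 \<noteq> x3" "x2 \<noteq> x4" "x3 \<noteq> x4"
    and rel: "\<And>s. s \<in> S0 \<Longrightarrow> coord3 x1 s - coord3 x2 s - coord3 x3 s + coord3 x4 s = 0"
  shows "\<exists>c\<in>K. (\<exists>x. c x \<noteq> 0) \<and> weight c = 4"
proof -
  define lf where "lf x = (if x = x1 then 1 else if x = x2 then -1 else if x = x3 then -1 else (1::'a))" for x
  have "\<exists>c\<in>K. (\<exists>x. c x \<noteq> 0) \<and> weight c = card {x1, x2, x3, x4}"
  proof (rule exists_word[where l = lf])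
    show "finite {x1, x2, x3, x4}" by simp
    show "{x1, x2, x3, x4} \<subseteq> N2 m A B C" using N by simp
    show "{x1, x2, x3, x4} \<noteq> {}" by simp
    show "\<And>x y. x \<in> {x1, x2, x3, x4} \<Longrightarrow> y \<in> {x1, x2, x3, x4} \<Longrightarrow> x \<noteq> y \<Longrightarrow> nonprop x y"
      using nonprop_q2[OF q2] by blast
    show "\<And>x. x \<in> {x1, x2, x3, x4} \<Longrightarrow> lf x \<noteq> 0" by (auto simp: lf_def)
    show "(\<Sum>x\<in>{x1, x2, x3, x4}. lf x * coord3 x s) = 0" if "s \<in> S0" for s
    proof -
      have "(\<Sum>x\<in>{x1, x2, x3, x4}. lf x * coord3 x s) = coord3 x1 s - coord3 x2 s - coord3 x3 s + coord3 x4 s"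
        using d by (simp add: lf_def algebra_simps)
      then show ?thesis using rel[OF that] by simp
    qed
  qed
  moreover have "card {x1, x2, x3, x4} = 4" using d by simp
  ultimately show ?thesis by simp
qed

definition c0 :: nat where "c0 = (SOME c. c \<in> C)"

lemma c0: "c0 \<in> C" using Cne someI_ex[of "\<lambda>c. c \<in> C"] by (auto simp: c0_def)

lemma c0m: "c0 \<in> {1..m}" using c0 Csub by blast

lemma et_uv: "et = uv t0" by (simp add: et_def uv_def)

lemma word3_q3:
  assumes q3: "CARD('a) \<ge> 3"
  shows "\<exists>c\<in>K. (\<exists>x. c x \<noteq> 0) \<and> weight c = 3"
proof -
  have "card {0::'a, -1} \<le> 2" by (rule card_insert_le_m1) auto
  then have "{0::'a, -1} \<noteq> UNIV" using q3 by (metis Suc_n_not_le_n numeral_2_eq_2 numeral_3_eq_3 order_trans)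
  then obtain \<alpha> :: 'a where al: "\<alpha> \<noteq> 0" "\<alpha> \<noteq> -1" by blast
  have al1: "1 + \<alpha> \<noteq> 0" using al(2) by (metis add.commute add_eq_0_iff)
  let ?e = "uv t0 :: nat \<Rightarrow> 'a" and ?f = "uv c0 :: nat \<Rightarrow> 'a"
  define x1 where "x1 = ((\<lambda>i::nat. 0::'a), (\<lambda>i::nat. 0::'a), ?e)"
  define x2 where "x2 = ((\<lambda>i::nat. 0::'a), ?f, (\<lambda>i. \<alpha> * ?e i))"
  define x3 where "x3 = ((\<lambda>i::nat. 0::'a), ?f, (\<lambda>i. (1 + \<alpha>) * ?e i))"
  have eC: "?e \<in> Delta_c m A" using uv_c t0 by blast
  have fC: "?f \<in> Delta m C" using uv_C c0 by blast
  have sc: "(\<lambda>i. b * ?e i) \<in> Delta_c m A" if "b \<noteq> 0" for b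
    by (rule vec_c[of _ t0]) (use that t0 in \<open>auto simp: vecs_def uv_def\<close>)
  have N: "x1 \<in> N2 m A B C" "x2 \<in> N2 m A B C" "x3 \<in> N2 m A B C"
    unfolding x1_def x2_def x3_def using N2_simple eC fC sc al(1) al1 zero_C by auto
  have c0v: "?f c0 = 1" "?e t0 = 1" by (simp_all add: uv_def)
  have d: "x1 \<noteq> x2" "x1 \<noteq> x3" "x2 \<noteq> x3"
    by ((rule neq2[of _ c0], simp add: x1_def x2_def c0v),
       (rule neq2[of _ c0], simp add: x1_def x3_def c0v),
       (rule neq3[of _ t0], simp add: x2_def x3_def c0v))
  have np: "nonprop x y" if xy: "x \<in> {x1, x2, x3}" "y \<in> {x1, x2, x3}" "x \<noteq> y" for x y
  proof (rule nonprop_I)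
    fix \<beta> :: 'a assume b: "\<beta> \<noteq> 0"
    consider "x = x1" "y = x2" | "x = x1" "y = x3" | "x = x2" "y = x1" | "x = x3" "y = x1"
      | "x = x2" "y = x3" | "x = x3" "y = x2" using xy by blast
    then show "\<exists>i. fst (snd y) i \<noteq> \<beta> * fst (snd x) i \<or> snd (snd y) i \<noteq> \<beta> * snd (snd x) i"
    proof cases
      case 1 then show ?thesis by (intro exI[of _ c0]) (simp add: x1_def x2_def c0v)
    next
      case 2 then show ?thesis by (intro exI[of _ c0]) (simp add: x1_def x3_def c0v)
    next
      case 3 then show ?thesis using b by (intro exI[of _ c0]) (simp add: x1_def x2_def c0v)
    next
      case 4 then show ?thesis using b by (intro exI[of _ c0]) (simp add: x1_def x3_def c0v)
    next
      case 5 then show ?thesis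
      proof (cases "\<beta> = 1")
        case True then show ?thesis using 5 by (intro exI[of _ t0]) (simp add: x2_def x3_def c0v)
      next
        case False then show ?thesis using 5 by (intro exI[of _ c0]) (simp add: x2_def x3_def c0v)
      qed
    next
      case 6 then show ?thesis
      proof (cases "\<beta> = 1")
        case True then show ?thesis using 6 by (intro exI[of _ t0]) (simp add: x2_def x3_def c0v)
      next
        case False then show ?thesis using 6 by (intro exI[of _ c0]) (simp add: x2_def x3_def c0v)
      qed
    qed
  qed
  have rel: "1 * coord3 x1 s + 1 * coord3 x2 s + (-1) * coord3 x3 s = 0" for s
    by (cases s) (simp add: x1_def x2_def x3_def coord3_def algebra_simps)
  show ?thesis
    by (rule exists_word3[OF N d np _ _ _ rel]) simp_all
qed

lemma word3_q2:
  assumes q2: "CARD('a) = 2" and cA: "card A \<le> m - 2"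
  shows "\<exists>c\<in>K. (\<exists>x. c x \<noteq> 0) \<and> weight c = 3"
proof -
  have Asub': "A \<subseteq> {1..m}" using Asub by blast
  have "card ({1..m} - A) = m - card A" using Asub' by (simp add: card_Diff_subset finite_subset)
  then have "card ({1..m} - A) \<ge> 2" using cA m2 by simp
  then have "card ({1..m} - A - {t0}) \<ge> 1" using t0 by simp
  then obtain i2 where i2: "i2 \<in> {1..m}" "i2 \<notin> A" "i2 \<noteq> t0"
    by (metis Diff_iff card.empty ex_in_conv insertCI not_one_le_zero)
  let ?e = "uv t0 :: nat \<Rightarrow> 'a" and ?f = "uv i2 :: nat \<Rightarrow> 'a"
  define x1 where "x1 = ((\<lambda>i::nat. 0::'a), (\<lambda>i::nat. 0::'a), ?e)"
  define x2 where "x2 = ((\<lambda>i::nat. 0::'a), (\<lambda>i::nat. 0::'a), ?f)"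
  define x3 where "x3 = ((\<lambda>i::nat. 0::'a), (\<lambda>i::nat. 0::'a), (\<lambda>i. ?e i + ?f i))"
  have eC: "?e \<in> Delta_c m A" using uv_c t0 by blast
  have fC: "?f \<in> Delta_c m A" using uv_c i2 by blast
  have sC: "(\<lambda>i. ?e i + ?f i) \<in> Delta_c m A"
    by (rule vec_c[of _ t0]) (use t0 i2 in \<open>auto simp: vecs_def uv_def\<close>)
  have N: "x1 \<in> N2 m A B C" "x2 \<in> N2 m A B C" "x3 \<in> N2 m A B C"
    unfolding x1_def x2_def x3_def using N2_simple eC fC sC zero_C by auto
  have d: "x1 \<noteq> x2" "x1 \<noteq> x3" "x2 \<noteq> x3"
    by ((rule neq3[of _ t0], use i2(3) in \<open>simp add: x1_def x2_def uv_def\<close>),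
       (rule neq3[of _ i2], use i2(3) in \<open>simp add: x1_def x3_def uv_def\<close>),
       (rule neq3[of _ t0], use i2(3) in \<open>simp add: x2_def x3_def uv_def\<close>))
  have np: "nonprop x y" if "x \<noteq> y" for x y using nonprop_q2[OF q2 that] .
  have rel: "1 * coord3 x1 s + 1 * coord3 x2 s + (-1) * coord3 x3 s = 0" for s
    by (cases s) (simp add: x1_def x2_def x3_def coord3_def algebra_simps)
  show ?thesis
    by (rule exists_word3[OF N d np _ _ _ rel]) simp_all
qed

lemma word4_q2:
  assumes q2: "CARD('a) = 2"
  shows "\<exists>c\<in>K. (\<exists>x. c x \<noteq> 0) \<and> weight c = 4"
proof -
  obtain a0 where a0: "a0 \<in> A" using Ane by blast
  have a0t: "a0 \<noteq> t0" using a0 t0 by blast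
  let ?e = "uv t0 :: nat \<Rightarrow> 'a" and ?f = "uv c0 :: nat \<Rightarrow> 'a" and ?g = "uv a0 :: nat \<Rightarrow> 'a"
  define x1 where "x1 = ((\<lambda>i::nat. 0::'a), (\<lambda>i::nat. 0::'a), ?e)"
  define x2 where "x2 = ((\<lambda>i::nat. 0::'a), ?f, ?e)"
  define x3 where "x3 = ((\<lambda>i::nat. 0::'a), (\<lambda>i::nat. 0::'a), (\<lambda>i. ?e i + ?g i))"
  define x4 where "x4 = ((\<lambda>i::nat. 0::'a), ?f, (\<lambda>i. ?e i + ?g i))"
  have eC: "?e \<in> Delta_c m A" using uv_c t0 by blast
  have fC: "?f \<in> Delta m C" using uv_C c0 by blast
  have a0m: "a0 \<in> {1..m}" using a0 Asub by blast
  have sC: "(\<lambda>i. ?e i + ?g i) \<in> Delta_c m A"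
    by (rule vec_c[of _ t0]) (use t0 a0m a0t in \<open>auto simp: vecs_def uv_def\<close>)
  have N: "x1 \<in> N2 m A B C" "x2 \<in> N2 m A B C" "x3 \<in> N2 m A B C" "x4 \<in> N2 m A B C"
    unfolding x1_def x2_def x3_def x4_def using N2_simple eC fC sC zero_C by auto
  have d: "x1 \<noteq> x2" "x1 \<noteq> x3" "x1 \<noteq> x4" "x2 \<noteq> x3" "x2 \<noteq> x4" "x3 \<noteq> x4"
    by ((rule neq2[of _ c0], simp add: x1_def x2_def uv_def),
       (rule neq3[of _ a0], use a0t in \<open>simp add: x1_def x3_def uv_def\<close>),
       (rule neq2[of _ c0], simp add: x1_def x4_def uv_def),
       (rule neq2[of _ c0], simp add: x2_def x3_def uv_def),
       (rule neq3[of _ a0], use a0t in \<open>simp add: x2_def x4_def uv_def\<close>),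
       (rule neq2[of _ c0], simp add: x3_def x4_def uv_def))
  have rel: "coord3 x1 s - coord3 x2 s - coord3 x3 s + coord3 x4 s = 0" for s
    by (cases s) (simp add: x1_def x2_def x3_def x4_def coord3_def algebra_simps)
  show ?thesis
    by (rule exists_word4[OF q2 N d rel])
qed

lemma finite_wset: "finite (weight ` {c \<in> K. \<exists>x. c x \<noteq> 0})"
  using finite_K by simp

lemma min_dist3:
  assumes "CARD('a) \<ge> 3 \<or> (CARD('a) = 2 \<and> card A \<le> m - 2)"
  shows "min_dist K = 3"
  unfolding min_dist_def
proof (rule Min_eqI[OF finite_wset])
  show "\<And>y. y \<in> weight ` {c \<in> K. \<exists>x. c x \<noteq> 0} \<Longrightarrow> 3 \<le> y" using weight_ge3 by auto
  obtain c where "c \<in> K" "\<exists>x. c x \<noteq> 0" "weight c = 3"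
    using assms word3_q3 word3_q2 by blast
  then show "3 \<in> weight ` {c \<in> K. \<exists>x. c x \<noteq> 0}" by force
qed

lemma min_dist4:
  assumes "CARD('a) = 2" "card A = m - 1"
  shows "min_dist K = 4"
  unfolding min_dist_def
proof (rule Min_eqI[OF finite_wset])
  show "4 \<le> y" if yin: "y \<in> weight ` {c \<in> K. \<exists>x. c x \<noteq> 0}" for y
  proof -
    obtain c where c: "c \<in> K" "\<exists>x. c x \<noteq> 0" "y = weight c" using yin by blast
    have "weight c \<ge> 3" using weight_ge3 c by blast
    moreover have "weight c \<noteq> 3" using weight_ne3_q2[OF assms c(1)] .
    ultimately show ?thesis using c by simp
  qed
  obtain c where "c \<in> K" "\<exists>x. c x \<noteq> 0" "weight c = 4"
    using word4_q2[OF assms(1)] by blast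
  then show "4 \<in> weight ` {c \<in> K. \<exists>x. c x \<noteq> 0}" by force
qed

end

lemma hamming:
  fixes Cd :: "(nat \<Rightarrow> 'a::{field,finite}) set"
  assumes q2: "CARD('a) = 2" and cp: "code_params {0..<n} Cd n k 5"
  shows "2 ^ k * (n choose 2) \<le> 2 ^ n"
proof -
  let ?I = "{0..<n}"
  let ?Vn = "{c :: nat \<Rightarrow> 'a. \<forall>x. x \<notin> ?I \<longrightarrow> c x = 0}"
  have sub: "Cd \<subseteq> ?Vn" and ss: "fv.subspace Cd" and dm: "fv.dim Cd = k" and md: "min_dist Cd = 5"
    using cp unfolding code_params_def by auto
  have fV: "finite ?Vn" and cV: "card ?Vn = 2 ^ n"
    using card_vanish[of ?I, where 'a='a] q2 by auto
  have fC: "finite Cd" using finite_subset[OF sub fV] .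
  have cC: "card Cd = 2 ^ k" using card_subspace[OF ss fC] dm q2 by simp
  define P2 where "P2 = {P. P \<subseteq> ?I \<and> card P = 2}"
  have cP2: "card P2 = n choose 2" unfolding P2_def using n_subsets[of ?I 2] by simp
  define ind where "ind P = (\<lambda>x. if x \<in> P then (1::'a) else 0)" for P :: "nat set"
  let ?H = "\<lambda>(c, P). c + ind P"
  have fW: "finite (weight ` {c \<in> Cd. \<exists>x. c x \<noteq> 0})" using fC by simp
  have w5: "5 \<le> weight d" if "d \<in> Cd" "\<exists>x. d x \<noteq> 0" for d
  proof -
    have "weight d \<in> weight ` {c \<in> Cd. \<exists>x. c x \<noteq> 0}" using that by blast
    then have "Min (weight ` {c \<in> Cd. \<exists>x. c x \<noteq> 0}) \<le> weight d" using Min_le[OF fW] by blast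
    then show ?thesis using md unfolding min_dist_def by simp
  qed
  have inj: "inj_on ?H (Cd \<times> P2)"
  proof (rule inj_onI)
    fix p p' assume p: "p \<in> Cd \<times> P2" and p': "p' \<in> Cd \<times> P2" and eq: "?H p = ?H p'"
    obtain c P where pe: "p = (c, P)" by (cases p)
    obtain c' Q where pe': "p' = (c', Q)" by (cases p')
    have h: "c \<in> Cd" "c' \<in> Cd" "P \<in> P2" "Q \<in> P2" using p p' pe pe' by auto
    have e: "c + ind P = c' + ind Q" using eq pe pe' by simp
    have cc: "c = c'"
    proof (rule ccontr)
      assume ne: "c \<noteq> c'"
      let ?d = "c - c'"
      have dC: "?d \<in> Cd" using fv.subspace_diff[OF ss h(1,2)] .
      have dnz: "\<exists>x. ?d x \<noteq> 0" using ne by (auto simp: fun_eq_iff)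
      have dd: "?d = ind Q - ind P" using e by (simp add: algebra_simps)
      have "{x. ?d x \<noteq> 0} \<subseteq> P \<union> Q" unfolding dd by (auto simp: ind_def)
      moreover have "finite P" "finite Q" "card P = 2" "card Q = 2" using h(3,4)
        by (auto simp: P2_def intro: finite_subset)
      ultimately have "weight ?d \<le> 4" unfolding weight_def
        by (metis (no_types, lifting) card_Un_le card_mono finite_UnI numeral_Bit0 order_trans)
      then show False using w5[OF dC dnz] by simp
    qed
    then have "ind P = ind Q" using e by simp
    then have "P = Q" unfolding ind_def by (auto simp: fun_eq_iff) (metis one_neq_zero)+
    then show "p = p'" using pe pe' cc by simp
  qed
  have img: "?H ` (Cd \<times> P2) \<subseteq> ?Vn"
  proof
    fix v assume "v \<in> ?H ` (Cd \<times> P2)"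
    then obtain c P where cP: "c \<in> Cd" "P \<in> P2" "v = c + ind P" by auto
    then have "c \<in> ?Vn" using sub by blast
    moreover have "P \<subseteq> ?I" using cP(2) by (simp add: P2_def)
    ultimately show "v \<in> ?Vn" using cP(3) by (auto simp: ind_def)
  qed
  have "card (Cd \<times> P2) \<le> card ?Vn" using card_inj_on_le[OF inj img fV] .
  then show ?thesis using cC cP2 cV by (simp add: card_cartesian_product)
qed

lemma binom_big:
  assumes "N = m + b + c" "b \<ge> 1" "c \<ge> (1::nat)"
  shows "2 ^ (2 * m + c) < ((2::nat) ^ N choose 2)"
proof -
  define M where "M = N - 1"
  have NM: "N = Suc M" using assms unfolding M_def by simp
  have "(2::nat) ^ N choose 2 = 2 * 2 ^ M * (2 * 2 ^ M - 1) div 2" unfolding NM by (simp add: choose_two)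
  also have "\<dots> = 2 ^ M * (2 * 2 ^ M - 1)" by simp
  also have "\<dots> \<ge> 2 ^ M * 2 ^ M" by (intro mult_le_mono2) simp
  finally have "(2::nat) ^ N choose 2 \<ge> 2 ^ (2 * M)" by (simp add: power_add mult_2)
  moreover have "2 * M \<ge> 2 * m + c + 1" using assms unfolding M_def by simp
  then have "(2::nat) ^ (2 * M) \<ge> 2 ^ (2 * m + c + 1)" by (intro power_increasing) auto
  moreover have "(2::nat) ^ (2 * m + c) < 2 ^ (2 * m + c + 1)" by simp
  ultimately show ?thesis by linarith
qed

lemma no_code:
  fixes Cd :: "(nat \<Rightarrow> 'a::{field,finite}) set"
  assumes q2: "CARD('a) = 2" and X: "2 ^ r < ((n::nat) choose 2)"
    and cp: "code_params {0..<n} Cd n (n - r) 5"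
  shows False
proof -
  have h: "2 ^ (n - r) * (n choose 2) \<le> 2 ^ n" using hamming[OF q2 cp] .
  show False
  proof (cases "r \<le> n")
    case True
    then have "(2::nat) ^ n = 2 ^ (n - r) * 2 ^ r" by (simp add: power_add[symmetric])
    also have "\<dots> < 2 ^ (n - r) * (n choose 2)" using X by simp
    finally show False using h by simp
  next
    case False
    then have a: "(2::nat) ^ n < 2 ^ r" by simp
    have "n - r = 0" using False by simp
    then have "n choose 2 \<le> 2 ^ n" using h by simp
    then show False using a X by linarith
  qed
qed


theorem mainTheorem15:
  fixes m :: nat and A B C :: "nat set"
    and Nbar :: "('a::{field,finite}) vec3 set"
  assumes "m \<ge> 2"
    and "A \<noteq> {}" and "B \<noteq> {}" and "C \<noteq> {}"
    and "C \<subseteq> {1..m}"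
    and "B \<subseteq> A" and "A \<subset> {1..m}"
    and "is_proj_reps (N2 m A B C) Nbar"
  shows "((CARD('a) \<ge> 3 \<or> (CARD('a) = 2 \<and> card A \<le> m - 2)) \<longrightarrow>
           code_params Nbar (dual_code Nbar (code_of m Nbar))
             (2 * CARD('a) ^ (card B + card C) * (CARD('a) ^ m - CARD('a) ^ card A) div (CARD('a) - 1))
             (2 * CARD('a) ^ (card B + card C) * (CARD('a) ^ m - CARD('a) ^ card A) div (CARD('a) - 1)
                - 2 * m - card C)
             3)
       \<and> ((CARD('a) = 2 \<and> card A = m - 1) \<longrightarrow>
           code_params Nbar (dual_code Nbar (code_of m Nbar))
             (2 ^ (m + card B + card C)) (2 ^ (m + card B + card C) - 2 * m - card C) 4
         \<and> dist_optimal TYPE('a)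
             (2 ^ (m + card B + card C)) (2 ^ (m + card B + card C) - 2 * m - card C) 4)"
proof -
  interpret cfg m A B C Nbar by (rule cfg.intro[OF assms])
  let ?q = "CARD('a)"
  have Asub': "A \<subseteq> {1..m}" using Asub by blast
  have cN: "card Nbar * (?q - 1) = 2 * ?q ^ (card B + card C) * (?q ^ m - ?q ^ card A)"
    using card_N2_Nbar card_N2(1)[OF BA Asub' Csub, where 'a='a] by simp
  have q1: "?q - 1 > 0" using card_field_ge2[where 'a='a] by simp
  have nN: "2 * ?q ^ (card B + card C) * (?q ^ m - ?q ^ card A) div (?q - 1) = card Nbar"
  proof -
    have "2 * ?q ^ (card B + card C) * (?q ^ m - ?q ^ card A) div (?q - 1) = card Nbar * (?q - 1) div (?q - 1)"
      using cN by simp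
    also have "\<dots> = card Nbar" using q1 by simp
    finally show ?thesis .
  qed
  have cp: "code_params Nbar (dual_code Nbar (code_of m Nbar)) (card Nbar) (card Nbar - 2 * m - card C) d"
    if "min_dist K = d" for d
    unfolding code_params_def K_eq
  proof (intro conjI)
    show "finite Nbar" by (rule finNbar)
    show "card Nbar = card Nbar" ..
    show "K \<subseteq> {c. \<forall>x. x \<notin> Nbar \<longrightarrow> c x = 0}" by (auto simp: K_def V_def)
    show "fv.subspace K" using dual_subspace by (simp add: K_def)
    show "fv.dim K = card Nbar - 2 * m - card C" using dim_K by simp
    show "min_dist K = d" by (rule that)
  qed
  have partA: "(?q \<ge> 3 \<or> (?q = 2 \<and> card A \<le> m - 2)) \<longrightarrow>
           code_params Nbar (dual_code Nbar (code_of m Nbar))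
             (2 * ?q ^ (card B + card C) * (?q ^ m - ?q ^ card A) div (?q - 1))
             (2 * ?q ^ (card B + card C) * (?q ^ m - ?q ^ card A) div (?q - 1) - 2 * m - card C) 3"
  proof
    assume H: "?q \<ge> 3 \<or> (?q = 2 \<and> card A \<le> m - 2)"
    show "code_params Nbar (dual_code Nbar (code_of m Nbar))
             (2 * ?q ^ (card B + card C) * (?q ^ m - ?q ^ card A) div (?q - 1))
             (2 * ?q ^ (card B + card C) * (?q ^ m - ?q ^ card A) div (?q - 1) - 2 * m - card C) 3"
      unfolding nN by (rule cp[OF min_dist3[OF H]])
  qed
  have partB: "(?q = 2 \<and> card A = m - 1) \<longrightarrow>
           code_params Nbar (dual_code Nbar (code_of m Nbar))
             (2 ^ (m + card B + card C)) (2 ^ (m + card B + card C) - 2 * m - card C) 4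
         \<and> dist_optimal TYPE('a)
             (2 ^ (m + card B + card C)) (2 ^ (m + card B + card C) - 2 * m - card C) 4"
  proof
    assume h: "?q = 2 \<and> card A = m - 1"
    obtain m' where m': "m = Suc m'" using m2 by (cases m) auto
    have cN2: "card Nbar = 2 * 2 ^ (card B + card C) * (2 ^ m - 2 ^ card A)" using cN h by simp
    have "(2::nat) ^ m - 2 ^ card A = 2 ^ m'" using h m' by simp
    then have "card Nbar = 2 * 2 ^ (card B + card C) * 2 ^ m'" using cN2 by simp
    then have n2: "card Nbar = 2 ^ (m + card B + card C)" using m' by (simp add: power_add)
    have fB: "finite B" using BA Asub' by (meson finite_atLeastAtMost finite_subset subset_trans)
    have fC: "finite C" using Csub by (rule finite_subset) simp
    have "card B \<noteq> 0" using fB Bne by simp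
    then have b1: "card B \<ge> 1" by linarith
    have "card C \<noteq> 0" using fC Cne by simp
    then have c1: "card C \<ge> 1" by linarith
    have X: "2 ^ (2 * m + card C) < ((2::nat) ^ (m + card B + card C) choose 2)"
      by (rule binom_big[OF refl b1 c1])
    have opt: "dist_optimal TYPE('a) (2 ^ (m + card B + card C)) (2 ^ (m + card B + card C) - 2 * m - card C) 4"
      unfolding dist_optimal_def
    proof
      assume "\<exists>Cd :: (nat \<Rightarrow> 'a) set. code_params {0..<2 ^ (m + card B + card C)} Cd (2 ^ (m + card B + card C))
                (2 ^ (m + card B + card C) - 2 * m - card C) (4 + 1)"
      then obtain Cd :: "(nat \<Rightarrow> 'a) set" where cd:
        "code_params {0..<2 ^ (m + card B + card C)} Cd (2 ^ (m + card B + card C))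
                (2 ^ (m + card B + card C) - 2 * m - card C) (4 + 1)" by blast
      have e: "(2::nat) ^ (m + card B + card C) - 2 * m - card C = 2 ^ (m + card B + card C) - (2 * m + card C)"
        by simp
      have e2: "(4::nat) + 1 = 5" by simp
      have "code_params {0..<2 ^ (m + card B + card C)} Cd (2 ^ (m + card B + card C))
                (2 ^ (m + card B + card C) - (2 * m + card C)) 5" using cd unfolding e e2 .
      then show False using no_code[OF _ X] h by blast
    qed
    show "code_params Nbar (dual_code Nbar (code_of m Nbar))
             (2 ^ (m + card B + card C)) (2 ^ (m + card B + card C) - 2 * m - card C) 4
         \<and> dist_optimal TYPE('a)
             (2 ^ (m + card B + card C)) (2 ^ (m + card B + card C) - 2 * m - card C) 4"
      using cp[OF min_dist4] h opt unfolding n2 by simp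
  qed
  show ?thesis using partA partB by blast
qed

end
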